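(* Let $p,q\geq 2$ be integers. (i) $\chi_{\mathrm{so}}(K_p\Box K_q)=pq$. (ii) If both $p$ and $q$ are odd (and at least $3$), then $\chi_{\mathrm{so}}(K_p\times K_q)=pq$. (iii) If $p$ is even and $q$ is odd, then $\chi_{\mathrm{so}}(K_p\times K_q)=q$. (iv) If both $p$ and $q$ are even, then $\chi_{\mathrm{so}}(K_p\times K_q)=\min(p,q)$.
   Context: A strong odd coloring of a simple graph $G$ is a proper vertex coloring of $G$ such that for every non-isolated vertex $v$ and every color $c$, either no vertex of the open neighborhood $N_G(v)$ has color $c$, or color $c$ is used on an odd number of vertices of $N_G(v)$; $\chi_{\mathrm{so}}(G)$ is the minimum number of colors in such a coloring. $K_n$ is the complete graph on $n$ vertices. The Cartesian product $G\Box H$ has vertex set $V_G\times V_H$, with $(g,h)(g',h')$ an edge iff ($g=g'$ and $hh'\in E_H$) or ($gg'\in E_G$ and $h=h'$). The direct product $G\times H$ has vertex set $V_G\times V_H$, with $(g,h)(g',h')$ an edge iff $gg'\in E_G$ and $hh'\in E_H$. *)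

theory Defs
  imports Main
begin

text \<open>A simple graph is given by a vertex set V and a symmetric irreflexive
adjacency relation E (only its restriction to V matters).\<close>

definition nbhd :: "'a set \<Rightarrow> ('a \<Rightarrow> 'a \<Rightarrow> bool) \<Rightarrow> 'a \<Rightarrow> 'a set" where
  "nbhd V E v = {u \<in> V. E v u}"

definition proper_coloring :: "'a set \<Rightarrow> ('a \<Rightarrow> 'a \<Rightarrow> bool) \<Rightarrow> ('a \<Rightarrow> nat) \<Rightarrow> bool" where
  "proper_coloring V E c \<longleftrightarrow> (\<forall>u\<in>V. \<forall>v\<in>V. E u v \<longrightarrow> c u \<noteq> c v)"

definition strong_odd_coloring :: "'a set \<Rightarrow> ('a \<Rightarrow> 'a \<Rightarrow> bool) \<Rightarrow> ('a \<Rightarrow> nat) \<Rightarrow> bool" where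
  "strong_odd_coloring V E c \<longleftrightarrow> proper_coloring V E c \<and>
     (\<forall>v\<in>V. nbhd V E v \<noteq> {} \<longrightarrow>
        (\<forall>k. {u \<in> nbhd V E v. c u = k} = {} \<or> odd (card {u \<in> nbhd V E v. c u = k})))"

definition chi_so :: "'a set \<Rightarrow> ('a \<Rightarrow> 'a \<Rightarrow> bool) \<Rightarrow> nat" where
  "chi_so V E = (LEAST k. \<exists>c. strong_odd_coloring V E c \<and> c ` V \<subseteq> {0..<k})"

definition K_verts :: "nat \<Rightarrow> nat set" where
  "K_verts n = {0..<n}"

definition K_adj :: "nat \<Rightarrow> nat \<Rightarrow> bool" where
  "K_adj x y \<longleftrightarrow> x \<noteq> y"

definition cart_adj :: "('a \<Rightarrow> 'a \<Rightarrow> bool) \<Rightarrow> ('b \<Rightarrow> 'b \<Rightarrow> bool) \<Rightarrow> 'a \<times> 'b \<Rightarrow> 'a \<times> 'b \<Rightarrow> bool" where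
  "cart_adj EG EH x y \<longleftrightarrow>
     (fst x = fst y \<and> EH (snd x) (snd y)) \<or> (EG (fst x) (fst y) \<and> snd x = snd y)"

definition dir_adj :: "('a \<Rightarrow> 'a \<Rightarrow> bool) \<Rightarrow> ('b \<Rightarrow> 'b \<Rightarrow> bool) \<Rightarrow> 'a \<times> 'b \<Rightarrow> 'a \<times> 'b \<Rightarrow> bool" where
  "dir_adj EG EH x y \<longleftrightarrow> EG (fst x) (fst y) \<and> EH (snd x) (snd y)"

end

theory Submission
  imports Defs
begin

lemma chi_so_eqI:
  assumes fin: "finite V" and c0: "strong_odd_coloring V E c0" "c0 ` V \<subseteq> {0..<n}"
    and lb: "\<And>c. strong_odd_coloring V E c \<Longrightarrow> n \<le> card (c ` V)"
  shows "chi_so V E = n"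
  unfolding chi_so_def
proof (rule Least_equality)
  show "\<exists>c. strong_odd_coloring V E c \<and> c ` V \<subseteq> {0..<n}" using c0 by blast
next
  fix k assume "\<exists>c. strong_odd_coloring V E c \<and> c ` V \<subseteq> {0..<k}"
  then obtain c where "strong_odd_coloring V E c" "c ` V \<subseteq> {0..<k}" by blast
  have "n \<le> card (c ` V)" using lb \<open>strong_odd_coloring V E c\<close> by blast
  moreover have "card (c ` V) \<le> card {0..<k}"
    using \<open>c ` V \<subseteq> {0..<k}\<close> by (intro card_mono) auto
  ultimately show "n \<le> k" by simp
qed

lemma inj_strong_odd:
  assumes fin: "finite V" and inj: "inj_on c V" and irr: "\<And>u. \<not> E u u"
  shows "strong_odd_coloring V E c"
  unfolding strong_odd_coloring_def proper_coloring_def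
proof (intro conjI ballI allI impI)
  fix u v assume "u \<in> V" "v \<in> V" "E u v"
  then show "c u \<noteq> c v" using inj irr by (metis inj_on_def)
next
  fix v k assume v: "v \<in> V" and "nbhd V E v \<noteq> {}"
  let ?S = "{u \<in> nbhd V E v. c u = k}"
  show "?S = {} \<or> odd (card ?S)"
  proof (cases "?S = {}")
    case False
    then obtain u where u: "u \<in> ?S" by blast
    have "?S = {u}"
    proof
      show "?S \<subseteq> {u}" using u inj unfolding nbhd_def inj_on_def by auto
    qed (use u in auto)
    then show ?thesis by simp
  qed simp
qed

abbreviation "PQ p q \<equiv> K_verts p \<times> K_verts q"

lemma fin_PQ: "finite (PQ p q)" by (simp add: K_verts_def)

lemma enc_inj: "inj_on (\<lambda>(a,b). a * q + b) (PQ p q)"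
proof (rule inj_onI)
  fix u v assume "u \<in> PQ p q" "v \<in> PQ p q" "(case u of (a,b) \<Rightarrow> a * q + b) = (case v of (a,b) \<Rightarrow> a * q + b)"
  then obtain a b a' b' where uv: "u = (a,b)" "v = (a',b')" "b < q" "b' < q" "a*q+b = a'*q+b'"
    by (auto simp: K_verts_def)
  have q0: "q > 0" using uv by simp
  have "a = (a*q+b) div q" using uv(3) q0 by simp
  also have "... = (a'*q+b') div q" using uv(5) by simp
  also have "... = a'" using uv(4) q0 by simp
  finally have "a = a'" .
  then have "a = a'" "b = b'" using uv by simp_all
  then show "u = v" using uv by simp
qed

lemma enc_range:
  assumes "p \<ge> 2" "q \<ge> 2"
  shows "(\<lambda>(a,b). a * q + b) ` (PQ p q) \<subseteq> {0..<p*q}"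
proof
  fix z assume "z \<in> (\<lambda>(a,b). a * q + b) ` (PQ p q)"
  then obtain a b where "z = a*q+b" "a < p" "b < q" by (auto simp: K_verts_def)
  moreover have "a*q + b < (a+1)*q" using \<open>b<q\<close> by simp
  moreover have "(a+1)*q \<le> p*q" using \<open>a<p\<close> by (intro mult_right_mono) auto
  ultimately show "z \<in> {0..<p*q}" by simp
qed

lemma card_PQ: "card (PQ p q) = p * q" by (simp add: K_verts_def card_cartesian_product)

lemma enc_so:
  assumes "p \<ge> 2" "q \<ge> 2"
  shows "strong_odd_coloring (PQ p q) (cart_adj K_adj K_adj) (\<lambda>(a,b). a * q + b)"
    "strong_odd_coloring (PQ p q) (dir_adj K_adj K_adj) (\<lambda>(a,b). a * q + b)"
  by (rule inj_strong_odd[OF fin_PQ enc_inj]; auto simp: cart_adj_def dir_adj_def K_adj_def)+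

lemma card_inj_lb:
  assumes "inj_on c V" "finite V" shows "card V \<le> card (c ` V)"
  using assms by (simp add: card_image)

lemma so_proper: "strong_odd_coloring V E c \<Longrightarrow> u \<in> V \<Longrightarrow> v \<in> V \<Longrightarrow> E u v \<Longrightarrow> c u \<noteq> c v"
  unfolding strong_odd_coloring_def proper_coloring_def by blast

lemma so_odd: "strong_odd_coloring V E c \<Longrightarrow> v \<in> V \<Longrightarrow> u \<in> V \<Longrightarrow> E v u \<Longrightarrow>
   {w \<in> nbhd V E v. c w = k} = {} \<or> odd (card {w \<in> nbhd V E v. c w = k})"
  unfolding strong_odd_coloring_def nbhd_def by blast

lemma cart_inj:
  assumes so: "strong_odd_coloring (PQ p q) (cart_adj K_adj K_adj) c"
  shows "inj_on c (PQ p q)"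
proof (rule inj_onI, rule ccontr)
  fix u v assume u: "u \<in> PQ p q" and v: "v \<in> PQ p q" and cuv: "c u = c v" and ne: "u \<noteq> v"
  obtain a b a' b' where uv: "u = (a,b)" "v = (a',b')" by (cases u, cases v) auto
  have ab: "a < p" "b < q" "a' < p" "b' < q" using u v uv by (auto simp: K_verts_def)
  show False
  proof (cases "a = a' \<or> b = b'")
    case True
    then have "cart_adj K_adj K_adj u v" using ne uv by (auto simp: cart_adj_def K_adj_def)
    then show False using so_proper[OF so u v] cuv by blast
  next
    case False
    let ?V = "PQ p q" and ?E = "cart_adj K_adj K_adj"
    let ?S = "{w \<in> nbhd ?V ?E (a,b'). c w = c u}"
    have w: "(a,b') \<in> ?V" using ab by (simp add: K_verts_def)
    have "?S = {u, v}"
    proof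
      show "{u, v} \<subseteq> ?S" using False u v uv cuv by (auto simp: nbhd_def cart_adj_def K_adj_def)
    next
      show "?S \<subseteq> {u, v}"
      proof
        fix z assume z: "z \<in> ?S"
        obtain x y where zxy: "z = (x,y)" by (cases z)
        have zV: "z \<in> ?V" and cz: "c z = c u" and adj: "(x = a \<and> y \<noteq> b') \<or> (x \<noteq> a \<and> y = b')"
          using z zxy by (auto simp: nbhd_def cart_adj_def K_adj_def)
        show "z \<in> {u, v}"
        proof (cases "x = a")
          case True
          show ?thesis
          proof (rule ccontr)
            assume "z \<notin> {u,v}"
            then have "y \<noteq> b" using True zxy uv by auto
            then have "?E z u" using True zxy uv by (auto simp: cart_adj_def K_adj_def)
            then show False using so_proper[OF so zV u] cz by blast
          qed
        next
          case xa: False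
          show ?thesis
          proof (rule ccontr)
            assume "z \<notin> {u,v}"
            then have "x \<noteq> a'" using xa adj zxy uv by auto
            then have "?E z v" using xa adj zxy uv by (auto simp: cart_adj_def K_adj_def)
            then show False using so_proper[OF so zV v] cz cuv by auto
          qed
        qed
      qed
    qed
    moreover have "?E (a,b') u" using False uv by (auto simp: cart_adj_def K_adj_def)
    ultimately show False using so_odd[OF so w u, of "c u"] ne by simp
  qed
qed


lemma dir_row:
  assumes so: "strong_odd_coloring (PQ p q) (dir_adj K_adj K_adj) c"
    and pq: "p \<ge> 2" "q \<ge> 2" and ab: "a < p" "b < q" "b' < q" "b \<noteq> b'"
    and ceq: "c (a,b) = c (a,b')"
  shows "(\<forall>y<q. c (a,y) = c (a,b)) \<and> even q"
proof -
  let ?V = "PQ p q" and ?E = "dir_adj K_adj K_adj"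
  define k where "k = c (a,b)"
  have inV: "\<And>x y. (x,y) \<in> ?V \<longleftrightarrow> x < p \<and> y < q" by (simp add: K_verts_def)
  have cls: "fst u = a" if "u \<in> ?V" "c u = k" for u
  proof (rule ccontr)
    assume na: "fst u \<noteq> a"
    obtain x y where u: "u = (x,y)" by (cases u)
    show False
    proof (cases "y = b")
      case True
      then have "?E u (a,b')" using na u ab by (auto simp: dir_adj_def K_adj_def)
      then show False using so_proper[OF so that(1), of "(a,b')"] inV ab that(2) ceq k_def by auto
    next
      case False
      then have "?E u (a,b)" using na u ab by (auto simp: dir_adj_def K_adj_def)
      then show False using so_proper[OF so that(1), of "(a,b)"] inV ab that(2) k_def by auto
    qed
  qed
  have "(if a = 0 then 1 else 0) < p \<and> (if a = 0 then 1 else (0::nat)) \<noteq> a" using pq by auto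
  then obtain x where x: "x < p" "x \<noteq> a" by blast
  define T where "T = {y \<in> {0..<q}. c (a,y) = k}"
  have finT: "finite T" by (simp add: T_def)
  have bT: "b \<in> T" "b' \<in> T" using ab ceq by (auto simp: T_def k_def)
  have cnt: "{u \<in> nbhd ?V ?E (x,y). c u = k} = Pair a ` (T - {y})" if "y < q" for y
  proof
    show "{u \<in> nbhd ?V ?E (x,y). c u = k} \<subseteq> Pair a ` (T - {y})"
    proof
      fix u assume u: "u \<in> {u \<in> nbhd ?V ?E (x,y). c u = k}"
      then have uV: "u \<in> ?V" and cu: "c u = k" by (auto simp: nbhd_def)
      have "fst u = a" using cls uV cu by blast
      then show "u \<in> Pair a ` (T - {y})" using u
        by (cases u) (auto simp: nbhd_def dir_adj_def K_adj_def T_def K_verts_def)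
    qed
  next
    show "Pair a ` (T - {y}) \<subseteq> {u \<in> nbhd ?V ?E (x,y). c u = k}"
      using x ab by (auto simp: nbhd_def dir_adj_def K_adj_def T_def K_verts_def)
  qed
  have cardc: "card {u \<in> nbhd ?V ?E (x,y). c u = k} = card (T - {y})" if "y < q" for y
    using cnt[OF that] by (simp add: card_image inj_on_def)
  have xyV: "(x,y) \<in> ?V" if "y < q" for y using x that inV by simp
  have adjex: "?E (x,y) (a, if y = b then b' else b)" for y
    using x ab by (auto simp: dir_adj_def K_adj_def)
  have aV: "(a, if y = b then b' else b) \<in> ?V" for y using ab inV by simp
  have oddc: "card (T - {y}) = 0 \<or> odd (card (T - {y}))" if "y < q" for y
  proof -
    let ?S = "{u \<in> nbhd ?V ?E (x,y). c u = k}"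
    have "?S = {} \<or> odd (card ?S)" using so_odd[OF so xyV[OF that] aV adjex, of k] .
    then show ?thesis
    proof
      assume "?S = {}" then have "card ?S = 0" by (simp only: card.empty)
      then show ?thesis using cardc[OF that] by simp
    next
      assume "odd (card ?S)" then show ?thesis using cardc[OF that] by simp
    qed
  qed
  have cT2: "card T \<ge> 2"
  proof -
    have "{b,b'} \<subseteq> T" using bT by auto
    then have "card {b,b'} \<le> card T" using finT by (rule card_mono[rotated])
    then show ?thesis using ab by simp
  qed
  have cb: "card (T - {b}) = card T - 1" using bT finT by simp
  have oddb: "odd (card T - 1)" using oddc[OF ab(2)] cb cT2 by auto
  have full: "T = {0..<q}"
  proof (rule ccontr)
    assume "T \<noteq> {0..<q}"
    moreover have "T \<subseteq> {0..<q}" by (auto simp: T_def)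
    ultimately have "\<exists>y\<in>{0..<q}. y \<notin> T" by blast
    then obtain y where y: "y < q" "y \<notin> T" by auto
    then have "card (T - {y}) = card T" by simp
    then have "odd (card T)" using oddc[OF y(1)] cT2 by auto
    then show False using oddb cT2 by presburger
  qed
  have "\<forall>y<q. c (a,y) = c (a,b)"
  proof (intro allI impI)
    fix y assume "y < q"
    then have "y \<in> T" using full by simp
    then show "c (a,y) = c (a,b)" unfolding T_def k_def by simp
  qed
  moreover have "even q"
  proof -
    have "card T = q" using full by simp
    then have "odd (q - 1)" using oddb by simp
    then show ?thesis using pq by presburger
  qed
  ultimately show ?thesis by blast
qed


lemma dir_col:
  assumes so: "strong_odd_coloring (PQ p q) (dir_adj K_adj K_adj) c"
    and pq: "p \<ge> 2" "q \<ge> 2" and ab: "b < q" "a < p" "a' < p" "a \<noteq> a'"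
    and ceq: "c (a,b) = c (a',b)"
  shows "(\<forall>x<p. c (x,b) = c (a,b)) \<and> even p"
proof -
  let ?V = "PQ p q" and ?E = "dir_adj K_adj K_adj"
  define k where "k = c (a,b)"
  have inV: "\<And>x y. (x,y) \<in> ?V \<longleftrightarrow> x < p \<and> y < q" by (simp add: K_verts_def)
  have cls: "snd u = b" if "u \<in> ?V" "c u = k" for u
  proof (rule ccontr)
    assume na: "snd u \<noteq> b"
    obtain x y where u: "u = (x,y)" by (cases u)
    show False
    proof (cases "x = a")
      case True
      then have "?E u (a',b)" using na u ab by (auto simp: dir_adj_def K_adj_def)
      then show False using so_proper[OF so that(1), of "(a',b)"] inV ab that(2) ceq k_def by auto
    next
      case False
      then have "?E u (a,b)" using na u ab by (auto simp: dir_adj_def K_adj_def)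
      then show False using so_proper[OF so that(1), of "(a,b)"] inV ab that(2) k_def by auto
    qed
  qed
  have "(if b = 0 then 1 else 0) < q \<and> (if b = 0 then 1 else (0::nat)) \<noteq> b" using pq by auto
  then obtain y where y: "y < q" "y \<noteq> b" by blast
  define T where "T = {x \<in> {0..<p}. c (x,b) = k}"
  have finT: "finite T" by (simp add: T_def)
  have bT: "a \<in> T" "a' \<in> T" using ab ceq by (auto simp: T_def k_def)
  have cnt: "{u \<in> nbhd ?V ?E (x,y). c u = k} = (\<lambda>z. (z,b)) ` (T - {x})" if "x < p" for x
  proof
    show "{u \<in> nbhd ?V ?E (x,y). c u = k} \<subseteq> (\<lambda>z. (z,b)) ` (T - {x})"
    proof
      fix u assume u: "u \<in> {u \<in> nbhd ?V ?E (x,y). c u = k}"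
      then have uV: "u \<in> ?V" and cu: "c u = k" by (auto simp: nbhd_def)
      have "snd u = b" using cls uV cu by blast
      then show "u \<in> (\<lambda>z. (z,b)) ` (T - {x})" using u
        by (cases u) (auto simp: nbhd_def dir_adj_def K_adj_def T_def K_verts_def)
    qed
  next
    show "(\<lambda>z. (z,b)) ` (T - {x}) \<subseteq> {u \<in> nbhd ?V ?E (x,y). c u = k}"
      using y ab by (auto simp: nbhd_def dir_adj_def K_adj_def T_def K_verts_def)
  qed
  have cardc: "card {u \<in> nbhd ?V ?E (x,y). c u = k} = card (T - {x})" if "x < p" for x
    using cnt[OF that] by (simp add: card_image inj_on_def)
  have xyV: "(x,y) \<in> ?V" if "x < p" for x using y that inV by simp
  have adjex: "?E (x,y) (if x = a then a' else a, b)" for x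
    using y ab by (auto simp: dir_adj_def K_adj_def)
  have aV: "(if x = a then a' else a, b) \<in> ?V" for x using ab inV by simp
  have oddc: "card (T - {x}) = 0 \<or> odd (card (T - {x}))" if "x < p" for x
  proof -
    let ?S = "{u \<in> nbhd ?V ?E (x,y). c u = k}"
    have "?S = {} \<or> odd (card ?S)" using so_odd[OF so xyV[OF that] aV adjex, of k] .
    then show ?thesis
    proof
      assume "?S = {}" then have "card ?S = 0" by (simp only: card.empty)
      then show ?thesis using cardc[OF that] by simp
    next
      assume "odd (card ?S)" then show ?thesis using cardc[OF that] by simp
    qed
  qed
  have cT2: "card T \<ge> 2"
  proof -
    have "{a,a'} \<subseteq> T" using bT by auto
    then have "card {a,a'} \<le> card T" using finT by (rule card_mono[rotated])
    then show ?thesis using ab by simp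
  qed
  have cb: "card (T - {a}) = card T - 1" using bT finT by simp
  have oddb: "odd (card T - 1)" using oddc[OF ab(2)] cb cT2 by auto
  have full: "T = {0..<p}"
  proof (rule ccontr)
    assume "T \<noteq> {0..<p}"
    moreover have "T \<subseteq> {0..<p}" by (auto simp: T_def)
    ultimately have "\<exists>y\<in>{0..<p}. y \<notin> T" by blast
    then obtain z where z: "z < p" "z \<notin> T" by auto
    then have "card (T - {z}) = card T" by simp
    then have "odd (card T)" using oddc[OF z(1)] cT2 by auto
    then show False using oddb cT2 by presburger
  qed
  have "\<forall>x<p. c (x,b) = c (a,b)"
  proof (intro allI impI)
    fix x assume "x < p"
    then have "x \<in> T" using full by simp
    then show "c (x,b) = c (a,b)" unfolding T_def k_def by simp
  qed
  moreover have "even p"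
  proof -
    have "card T = p" using full by simp
    then have "odd (p - 1)" using oddb by simp
    then show ?thesis using pq by presburger
  qed
  ultimately show ?thesis by blast
qed

lemma snd_so:
  assumes "even p" "p \<ge> 2" "q \<ge> 2"
  shows "strong_odd_coloring (PQ p q) (dir_adj K_adj K_adj) snd"
  unfolding strong_odd_coloring_def proper_coloring_def
proof (intro conjI ballI allI impI)
  fix u v :: "nat \<times> nat" assume "dir_adj K_adj K_adj u v"
  then show "snd u \<noteq> snd v" by (simp add: dir_adj_def K_adj_def)
next
  fix v :: "nat \<times> nat" and k assume v: "v \<in> PQ p q"
  obtain x y where xy: "v = (x,y)" by (cases v)
  have x: "x < p" using v xy by (simp add: K_verts_def)
  let ?S = "{u \<in> nbhd (PQ p q) (dir_adj K_adj K_adj) v. snd u = k}"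
  show "?S = {} \<or> odd (card ?S)"
  proof (cases "k = y \<or> k \<ge> q")
    case True
    then have "?S = {}" using xy by (auto simp: nbhd_def dir_adj_def K_adj_def K_verts_def)
    then show ?thesis by simp
  next
    case False
    then have "?S = (\<lambda>z. (z,k)) ` ({0..<p} - {x})" using xy
      by (auto simp: nbhd_def dir_adj_def K_adj_def K_verts_def)
    then have "card ?S = card ({0..<p} - {x})" by (simp add: card_image inj_on_def)
    also have "... = p - 1" using x by simp
    finally show ?thesis using assms by simp
  qed
qed

lemma fst_so:
  assumes "even q" "p \<ge> 2" "q \<ge> 2"
  shows "strong_odd_coloring (PQ p q) (dir_adj K_adj K_adj) fst"
  unfolding strong_odd_coloring_def proper_coloring_def
proof (intro conjI ballI allI impI)
  fix u v :: "nat \<times> nat" assume "dir_adj K_adj K_adj u v"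
  then show "fst u \<noteq> fst v" by (simp add: dir_adj_def K_adj_def)
next
  fix v :: "nat \<times> nat" and k assume v: "v \<in> PQ p q"
  obtain x y where xy: "v = (x,y)" by (cases v)
  have y: "y < q" using v xy by (simp add: K_verts_def)
  let ?S = "{u \<in> nbhd (PQ p q) (dir_adj K_adj K_adj) v. fst u = k}"
  show "?S = {} \<or> odd (card ?S)"
  proof (cases "k = x \<or> k \<ge> p")
    case True
    then have "?S = {}" using xy by (auto simp: nbhd_def dir_adj_def K_adj_def K_verts_def)
    then show ?thesis by simp
  next
    case False
    then have "?S = Pair k ` ({0..<q} - {y})" using xy
      by (auto simp: nbhd_def dir_adj_def K_adj_def K_verts_def)
    then have "card ?S = card ({0..<q} - {y})" by (simp add: card_image inj_on_def)
    also have "... = q - 1" using y by simp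
    finally show ?thesis using assms by simp
  qed
qed


lemma img_lb:
  assumes "inj_on f A" "f ` A \<subseteq> c ` V" "finite V"
  shows "card A \<le> card (c ` V)"
proof -
  have "card A = card (f ` A)" using assms(1) by (simp add: card_image)
  also have "... \<le> card (c ` V)" using assms by (intro card_mono) auto
  finally show ?thesis .
qed

lemma dir_inj_odd:
  assumes so: "strong_odd_coloring (PQ p q) (dir_adj K_adj K_adj) c"
    and pq: "p \<ge> 2" "q \<ge> 2" "odd p" "odd q"
  shows "inj_on c (PQ p q)"
proof (rule inj_onI, rule ccontr)
  fix u v assume u: "u \<in> PQ p q" and v: "v \<in> PQ p q" and cuv: "c u = c v" and ne: "u \<noteq> v"
  obtain a b a' b' where uv: "u = (a,b)" "v = (a',b')" by (cases u, cases v) auto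
  have ab: "a < p" "b < q" "a' < p" "b' < q" using u v uv by (auto simp: K_verts_def)
  show False
  proof (cases "a = a'")
    case True
    then have "b \<noteq> b'" using ne uv by auto
    then show False using dir_row[OF so pq(1,2) ab(1,2,4)] True cuv uv pq by auto
  next
    case False
    show False
    proof (cases "b = b'")
      case True
      then show False using dir_col[OF so pq(1,2) ab(2,1,3) False] True cuv uv pq by auto
    next
      case F2: False
      then have "dir_adj K_adj K_adj u v" using False uv by (simp add: dir_adj_def K_adj_def)
      then show False using so_proper[OF so u v] cuv by blast
    qed
  qed
qed

lemma row0_inj:
  assumes so: "strong_odd_coloring (PQ p q) (dir_adj K_adj K_adj) c"
    and pq: "p \<ge> 2" "q \<ge> 2" and nf: "\<not> (\<forall>y<q. c (0,y) = c (0,0))"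
  shows "inj_on (\<lambda>y. c (0,y)) {0..<q}"
proof (rule inj_onI, rule ccontr)
  fix y y' assume yy: "y \<in> {0..<q}" "y' \<in> {0..<q}" "c (0,y) = c (0,y')" "y \<noteq> y'"
  have h: "\<forall>z<q. c (0,z) = c (0,y)"
  proof -
    have "0 < p" using pq by simp
    have yq: "y < q" "y' < q" using yy(1,2) by simp_all
    from dir_row[OF so pq \<open>0 < p\<close> yq yy(4,3)] show ?thesis by (rule conjunct1)
  qed
  have "0 < q" using pq by simp
  from h[rule_format, OF this] have e: "c (0,0) = c (0,y)" .
  have "\<forall>z<q. c (0,z) = c (0,0)"
  proof (intro allI impI)
    fix z assume "z < q"
    from h[rule_format, OF this] e show "c (0,z) = c (0,0)" by (rule trans_sym)
  qed
  with nf show False by blast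
qed

lemma col0_inj:
  assumes so: "strong_odd_coloring (PQ p q) (dir_adj K_adj K_adj) c"
    and pq: "p \<ge> 2" "q \<ge> 2" and nf: "\<not> (\<forall>x<p. c (x,0) = c (0,0))"
  shows "inj_on (\<lambda>x. c (x,0)) {0..<p}"
proof (rule inj_onI, rule ccontr)
  fix x x' assume xx: "x \<in> {0..<p}" "x' \<in> {0..<p}" "c (x,0) = c (x',0)" "x \<noteq> x'"
  have h: "\<forall>z<p. c (z,0) = c (x,0)"
  proof -
    have "0 < q" using pq by simp
    have xp: "x < p" "x' < p" using xx(1,2) by simp_all
    from dir_col[OF so pq \<open>0 < q\<close> xp xx(4,3)] show ?thesis by (rule conjunct1)
  qed
  have "0 < p" using pq by simp
  from h[rule_format, OF this] have e: "c (0,0) = c (x,0)" .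
  have "\<forall>z<p. c (z,0) = c (0,0)"
  proof (intro allI impI)
    fix z assume "z < p"
    from h[rule_format, OF this] e show "c (z,0) = c (0,0)" by (rule trans_sym)
  qed
  with nf show False by blast
qed

lemma row_img: "(\<lambda>y. c (0,y)) ` {0..<q} \<subseteq> c ` PQ p q" if "p \<ge> 2"
  using that by (auto simp: K_verts_def)

lemma col_img: "(\<lambda>x. c (x,0)) ` {0..<p} \<subseteq> c ` PQ p q" if "q \<ge> 2"
  using that by (auto simp: K_verts_def)

lemma lb_iii:
  assumes so: "strong_odd_coloring (PQ p q) (dir_adj K_adj K_adj) c"
    and pq: "p \<ge> 2" "q \<ge> 2" "odd q"
  shows "q \<le> card (c ` PQ p q)"
proof -
  have "\<not> (\<forall>y<q. c (0,y) = c (0,0))"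
  proof
    assume "\<forall>y<q. c (0,y) = c (0,0)"
    moreover have "(1::nat) < q" using pq by simp
    ultimately have "c (0,1) = c (0,0)" by blast
    then have e: "c (0,0) = c (0,1)" by (rule sym)
    have h: "0 < p" "0 < q" "1 < q" "(0::nat) \<noteq> 1" using pq by simp_all
    from dir_row[OF so pq(1,2) h e] have "even q" by (rule conjunct2)
    then show False using pq(3) by simp
  qed
  from img_lb[OF row0_inj[OF so pq(1,2) this] row_img[OF pq(1)] fin_PQ] show ?thesis by simp
qed

lemma lb_iv:
  assumes so: "strong_odd_coloring (PQ p q) (dir_adj K_adj K_adj) c"
    and pq: "p \<ge> 2" "q \<ge> 2"
  shows "min p q \<le> card (c ` PQ p q)"
proof (cases "\<forall>y<q. c (0,y) = c (0,0)")
  case False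
  from img_lb[OF row0_inj[OF so pq False] row_img[OF pq(1)] fin_PQ] show ?thesis by simp
next
  case rowT: True
  have "\<not> (\<forall>x<p. c (x,0) = c (0,0))"
  proof
    assume "\<forall>x<p. c (x,0) = c (0,0)"
    moreover have "(1::nat) < p" "(1::nat) < q" using pq by simp_all
    ultimately have "c (1,0) = c (0,0)" "c (0,1) = c (0,0)" using rowT by blast+
    then have "c (1,0) = c (0,1)" by (rule trans_sym)
    moreover have "dir_adj K_adj K_adj (1,0) (0,1)" by (simp add: dir_adj_def K_adj_def)
    moreover have "(1,0) \<in> PQ p q" "(0,1) \<in> PQ p q" using pq by (auto simp: K_verts_def)
    ultimately show False using so_proper[OF so] by blast
  qed
  from img_lb[OF col0_inj[OF so pq this] col_img[OF pq(2)] fin_PQ] show ?thesis by simp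
qed

theorem theorem4p4:
  fixes p q :: nat
  assumes "p \<ge> 2" and "q \<ge> 2"
  shows "chi_so (K_verts p \<times> K_verts q) (cart_adj K_adj K_adj) = p * q
    \<and> (odd p \<and> odd q \<longrightarrow> chi_so (K_verts p \<times> K_verts q) (dir_adj K_adj K_adj) = p * q)
    \<and> (even p \<and> odd q \<longrightarrow> chi_so (K_verts p \<times> K_verts q) (dir_adj K_adj K_adj) = q)
    \<and> (even p \<and> even q \<longrightarrow> chi_so (K_verts p \<times> K_verts q) (dir_adj K_adj K_adj) = min p q)"
proof (intro conjI impI)
  show "chi_so (PQ p q) (cart_adj K_adj K_adj) = p * q"
  proof (rule chi_so_eqI[OF fin_PQ enc_so(1)[OF assms] enc_range[OF assms]])
    fix c assume "strong_odd_coloring (PQ p q) (cart_adj K_adj K_adj) c"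
    from card_inj_lb[OF cart_inj[OF this] fin_PQ] show "p * q \<le> card (c ` PQ p q)"
      by (simp add: card_PQ)
  qed
next
  assume o: "odd p \<and> odd q"
  show "chi_so (PQ p q) (dir_adj K_adj K_adj) = p * q"
  proof (rule chi_so_eqI[OF fin_PQ enc_so(2)[OF assms] enc_range[OF assms]])
    fix c assume "strong_odd_coloring (PQ p q) (dir_adj K_adj K_adj) c"
    from card_inj_lb[OF dir_inj_odd[OF this assms] fin_PQ] o show "p * q \<le> card (c ` PQ p q)"
      by (simp add: card_PQ)
  qed
next
  assume o: "even p \<and> odd q"
  have r: "snd ` PQ p q \<subseteq> {0..<q}" by (auto simp: K_verts_def)
  show "chi_so (PQ p q) (dir_adj K_adj K_adj) = q"
    by (rule chi_so_eqI[OF fin_PQ snd_so[OF _ assms] r]) (use o lb_iii assms in auto)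
next
  assume o: "even p \<and> even q"
  show "chi_so (PQ p q) (dir_adj K_adj K_adj) = min p q"
  proof (cases "p \<le> q")
    case True
    have r: "fst ` PQ p q \<subseteq> {0..<min p q}" using True by (auto simp: K_verts_def)
    show ?thesis
      by (rule chi_so_eqI[OF fin_PQ fst_so[OF _ assms] r]) (use o lb_iv assms in auto)
  next
    case False
    have r: "snd ` PQ p q \<subseteq> {0..<min p q}" using False by (auto simp: K_verts_def)
    show ?thesis
      by (rule chi_so_eqI[OF fin_PQ snd_so[OF _ assms] r]) (use o lb_iv assms in auto)
  qed
qed

end
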